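(* There exists a normal sequence $S\in\{0,1\}^\omega$ that is LZ-deep.
   Context: $S\upharpoonright n$ is the length-$n$ prefix of $S$. $S$ is normal if every string $x\in\{0,1\}^*$ occurs as a substring of $S$ with asymptotic frequency $2^{-|x|}$. A finite-state transducer (FST) is $T=(Q,q_0,\delta,\nu)$ with finite state set $Q$, start state $q_0$, $\delta:Q\times\{0,1\}\to Q$, $\nu:Q\times\{0,1\}\to\{0,1\}^*$; $T(\lambda)=\lambda$, $T(xb)=T(x)\nu(\hat\delta(x),b)$; $T$ is an ILFST if $x\mapsto(T(x),\hat\delta(x))$ is injective. LZ denotes the Lempel–Ziv 78 compressor: it parses $x=x_1\cdots x_n$ into phrases, each distinct from all earlier ones (except possibly the last), with $x_i=x_{l(i)}b_i$, $l(i)<i$, $b_i\in\{0,1\}$, $x_0=\lambda$; it outputs $c_{l(1)}b_1\cdots c_{l(n)}b_n$ where $c_j$ is a prefix-free encoding of the dictionary index $j$. $S$ is LZ-deep if there is $\alpha>0$ such that for every ILFST $C$, $|C(S\upharpoonright n)|-|\mathrm{LZ}(S\upharpoonright n)|\ge\alpha n$ for all but finitely many $n$. *)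

theory Defs
  imports Complex_Main
begin

text \<open>Infinite binary sequences are functions nat => bool; bits are bool (False = 0, True = 1).\<close>

definition prefix :: "(nat \<Rightarrow> bool) \<Rightarrow> nat \<Rightarrow> bool list" where
  "prefix S n = map S [0..<n]"

definition occ :: "(nat \<Rightarrow> bool) \<Rightarrow> bool list \<Rightarrow> nat \<Rightarrow> nat" where
  "occ S x n = card {i. i + length x \<le> n \<and> map S [i..<i + length x] = x}"

definition normal :: "(nat \<Rightarrow> bool) \<Rightarrow> bool" where
  "normal S \<longleftrightarrow> (\<forall>x :: bool list.
     (\<lambda>n. real (occ S x n) / real n) \<longlonglongrightarrow> 1 / 2 ^ length x)"

text \<open>Finite-state transducers T = (Q, q0, delta, nu) with states taken from nat.\<close>
type_synonym fst = "nat set \<times> nat \<times> (nat \<Rightarrow> bool \<Rightarrow> nat) \<times> (nat \<Rightarrow> bool \<Rightarrow> bool list)"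

definition is_fst :: "fst \<Rightarrow> bool" where
  "is_fst T = (case T of (Q, q0, \<delta>, \<nu>) \<Rightarrow>
      finite Q \<and> q0 \<in> Q \<and> (\<forall>q\<in>Q. \<forall>b. \<delta> q b \<in> Q))"

fun run :: "(nat \<Rightarrow> bool \<Rightarrow> nat) \<Rightarrow> (nat \<Rightarrow> bool \<Rightarrow> bool list) \<Rightarrow> nat \<Rightarrow> bool list \<Rightarrow> bool list \<times> nat" where
  "run \<delta> \<nu> q [] = ([], q)"
| "run \<delta> \<nu> q (b # x) = (let (y, q') = run \<delta> \<nu> (\<delta> q b) x in (\<nu> q b @ y, q'))"

text \<open>fst_out T x = T(x), fst_state T x = the extended transition function applied to x.\<close>
definition fst_out :: "fst \<Rightarrow> bool list \<Rightarrow> bool list" where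
  "fst_out T x = (case T of (Q, q0, \<delta>, \<nu>) \<Rightarrow> fst (run \<delta> \<nu> q0 x))"

definition fst_state :: "fst \<Rightarrow> bool list \<Rightarrow> nat" where
  "fst_state T x = (case T of (Q, q0, \<delta>, \<nu>) \<Rightarrow> snd (run \<delta> \<nu> q0 x))"

definition ILFST :: "fst \<Rightarrow> bool" where
  "ILFST T \<longleftrightarrow> is_fst T \<and> inj (\<lambda>x. (fst_out T x, fst_state T x))"

text \<open>Prefix-free encoding of dictionary indices: binary representation plus a
  self-delimiting length header (bits of the length doubled, then 01).\<close>
fun bin :: "nat \<Rightarrow> bool list" where
  "bin n = (if n = 0 then [] else bin (n div 2) @ [odd n])"

definition self_delim :: "bool list \<Rightarrow> bool list" where
  "self_delim x = concat (map (\<lambda>b. [b, b]) (bin (length x))) @ [False, True] @ x"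

definition code_idx :: "nat \<Rightarrow> bool list" where
  "code_idx j = self_delim (bin j)"

definition idx :: "bool list list \<Rightarrow> bool list \<Rightarrow> nat" where
  "idx D p = (LEAST i. i < length D \<and> D ! i = p)"

text \<open>LZ78 parsing: D is the dictionary (D!0 = empty phrase), cur the current
  (already-in-dictionary) partial phrase. Outputs pairs (l(i), b_i).\<close>
fun lz_aux :: "bool list list \<Rightarrow> bool list \<Rightarrow> bool list \<Rightarrow> (nat \<times> bool) list" where
  "lz_aux D cur [] = (if cur = [] then [] else [(idx D (butlast cur), last cur)])"
| "lz_aux D cur (b # w) =
     (if cur @ [b] \<in> set D then lz_aux D (cur @ [b]) w
      else (idx D cur, b) # lz_aux (D @ [cur @ [b]]) [] w)"

definition LZ :: "bool list \<Rightarrow> bool list" where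
  "LZ x = concat (map (\<lambda>(l, b). code_idx l @ [b]) (lz_aux [[]] [] x))"

definition LZ_deep :: "(nat \<Rightarrow> bool) \<Rightarrow> bool" where
  "LZ_deep S \<longleftrightarrow> (\<exists>\<alpha>::real. \<alpha> > 0 \<and> (\<forall>C. ILFST C \<longrightarrow>
     (\<forall>\<^sub>F n in sequentially.
        real (length (fst_out C (prefix S n))) - real (length (LZ (prefix S n))) \<ge> \<alpha> * real n)))"

end

theory Submission
  imports Defs "HOL-Real_Asymp.Real_Asymp"
begin


fun words :: "nat \<Rightarrow> bool list list" where
  "words 0 = [[]]"
| "words (Suc k) = concat (map (\<lambda>w. [False # w, True # w]) (words k))"

lemma set_words: "set (words k) = {w. length w = k}"
proof (induction k)
  case 0 then show ?case by auto
next
  case (Suc k)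
  show ?case
  proof
    show "set (words (Suc k)) \<subseteq> {w. length w = Suc k}" using Suc by auto
    show "{w. length w = Suc k} \<subseteq> set (words (Suc k))"
    proof
      fix w :: "bool list" assume "w \<in> {w. length w = Suc k}"
      then obtain b w' where w: "w = b # w'" "length w' = k" by (cases w) auto
      then show "w \<in> set (words (Suc k))" using Suc by (cases b) auto
    qed
  qed
qed

lemma card_len: "card {w :: bool list. length w = k} = 2 ^ k"
proof -
  have "card {w :: bool list. set w \<subseteq> UNIV \<and> length w = k} = card (UNIV :: bool set) ^ k"
    by (rule card_lists_length_eq) simp
  then show ?thesis by simp
qed

lemma finite_len: "finite {w :: bool list. length w = k}"
  using card_len[of k] by (metis card.infinite power_not_zero zero_neq_numeral)

lemma length_words: "length (words k) = 2 ^ k"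
proof (induction k)
  case 0 then show ?case by simp
next
  case (Suc k)
  have "length (words (Suc k)) = 2 * length (words k)"
    by (simp add: length_concat comp_def sum_list_triv)
  then show ?case using Suc by simp
qed

lemma distinct_words: "distinct (words k)"
  by (rule card_distinct) (simp add: set_words card_len length_words)

lemma sum_words: "(\<Sum>w\<leftarrow>words k. f w) = (\<Sum>w\<in>{w. length w = k}. f w)"
  by (simp add: sum_list_distinct_conv_sum_set distinct_words set_words)

lemma card_pat:
  assumes A: "\<forall>a\<in>A. length a = t" and it: "i + t \<le> k"
  shows "card {w :: bool list. length w = k \<and> take t (drop i w) \<in> A} = card A * 2 ^ (k - t)"
proof -
  let ?U = "{u :: bool list. length u = i}"
  let ?V = "{v :: bool list. length v = k - i - t}"
  let ?f = "\<lambda>(u, a, v). u @ a @ v"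
  have finA: "finite A"
    by (rule finite_subset[OF _ finite_len[of t]]) (use A in auto)
  have eq: "{w :: bool list. length w = k \<and> take t (drop i w) \<in> A} = ?f ` (?U \<times> A \<times> ?V)"
  proof
    show "?f ` (?U \<times> A \<times> ?V) \<subseteq> {w. length w = k \<and> take t (drop i w) \<in> A}"
      using A it by auto
    show "{w. length w = k \<and> take t (drop i w) \<in> A} \<subseteq> ?f ` (?U \<times> A \<times> ?V)"
    proof
      fix w assume w: "w \<in> {w. length w = k \<and> take t (drop i w) \<in> A}"
      have "w = take i w @ take t (drop i w) @ drop t (drop i w)"
        by (metis append_take_drop_id)
      moreover have "(take i w, take t (drop i w), drop t (drop i w)) \<in> ?U \<times> A \<times> ?V"
        using w it by auto
      ultimately show "w \<in> ?f ` (?U \<times> A \<times> ?V)"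
        by (metis (no_types, lifting) case_prod_conv image_eqI)
    qed
  qed
  have inj: "inj_on ?f (?U \<times> A \<times> ?V)"
  proof (rule inj_onI)
    fix p q assume p: "p \<in> ?U \<times> A \<times> ?V" and q: "q \<in> ?U \<times> A \<times> ?V" and e: "?f p = ?f q"
    obtain u a v where pp: "p = (u, a, v)" by (cases p) auto
    obtain u' a' v' where qq: "q = (u', a', v')" by (cases q) auto
    have l: "length u = length u'" "length a = length a'" using p q pp qq A by auto
    from e pp qq have "u @ a @ v = u' @ a' @ v'" by simp
    then have "u = u'" "a @ v = a' @ v'" using l by auto
    then have "a = a'" "v = v'" using l by auto
    then show "p = q" using pp qq \<open>u = u'\<close> by simp
  qed
  have "card {w :: bool list. length w = k \<and> take t (drop i w) \<in> A} = card (?U \<times> A \<times> ?V)"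
    unfolding eq by (rule card_image[OF inj])
  also have "\<dots> = 2 ^ i * (card A * 2 ^ (k - i - t))"
    by (simp add: card_cartesian_product card_len)
  also have "\<dots> = card A * 2 ^ (k - t)"
  proof -
    have "2 ^ i * 2 ^ (k - i - t) = (2::nat) ^ (k - t)"
      using it by (simp add: power_add[symmetric])
    then show ?thesis by (metis mult.left_commute)
  qed
  finally show ?thesis .
qed



definition cnt :: "bool list \<Rightarrow> bool list \<Rightarrow> nat" where
  "cnt x u = card {i. i + length x \<le> length u \<and> take (length x) (drop i u) = x}"

definition Bk :: "nat \<Rightarrow> bool list" where
  "Bk k = concat (words k)"

lemma length_Bk: "length (Bk k) = k * 2 ^ k"
proof -
  have "length (Bk k) = (\<Sum>w\<leftarrow>words k. length w)" by (simp add: Bk_def length_concat)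
  also have "\<dots> = (\<Sum>w\<leftarrow>words k. k)"
    by (rule arg_cong[where f=sum_list], rule map_cong) (auto simp: set_words)
  also have "\<dots> = k * 2 ^ k" by (simp add: sum_list_triv length_words)
  finally show ?thesis .
qed

lemma cnt_le_len: assumes "length x \<ge> 1" shows "cnt x u \<le> length u"
proof -
  have "{i. i + length x \<le> length u \<and> take (length x) (drop i u) = x} \<subseteq> {..<length u}"
    using assms by auto
  then show ?thesis unfolding cnt_def by (metis card_lessThan card_mono finite_lessThan)
qed

lemma cnt_append_ge:
  assumes "length x \<ge> 1" shows "cnt x u + cnt x v \<le> cnt x (u @ v)"
proof -
  let ?t = "length x"
  let ?A = "\<lambda>u. {i. i + ?t \<le> length u \<and> take ?t (drop i u) = x}"
  have fin: "finite (?A w)" for w by (rule finite_subset[of _ "{..length w}"]) auto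
  have sub: "?A u \<union> (\<lambda>i. i + length u) ` ?A v \<subseteq> ?A (u @ v)"
    by auto
  have disj: "?A u \<inter> (\<lambda>i. i + length u) ` ?A v = {}" using assms by auto
  have "cnt x u + cnt x v = card (?A u) + card ((\<lambda>i. i + length u) ` ?A v)"
    unfolding cnt_def by (simp add: card_image inj_on_def)
  also have "\<dots> = card (?A u \<union> (\<lambda>i. i + length u) ` ?A v)"
    by (rule card_Un_disjoint[symmetric]) (use fin disj in auto)
  also have "\<dots> \<le> card (?A (u @ v))" by (rule card_mono[OF fin sub])
  finally show ?thesis unfolding cnt_def .
qed

lemma cnt_append_le:
  shows "cnt x (u @ v) \<le> cnt x u + cnt x v + length x"
proof -
  let ?t = "length x"
  let ?A = "\<lambda>u. {i. i + ?t \<le> length u \<and> take ?t (drop i u) = x}"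
  have fin: "finite (?A w)" for w by (rule finite_subset[of _ "{..length w}"]) auto
  have sub: "?A (u @ v) \<subseteq> ?A u \<union> (\<lambda>i. i + length u) ` ?A v \<union> {length u - ?t ..< length u}"
  proof
    fix i assume i: "i \<in> ?A (u @ v)"
    show "i \<in> ?A u \<union> (\<lambda>i. i + length u) ` ?A v \<union> {length u - ?t ..< length u}"
    proof (cases "i + ?t \<le> length u")
      case True
      then have "take ?t (drop i (u @ v)) = take ?t (drop i u)" by simp
      then show ?thesis using i True by auto
    next
      case False
      show ?thesis
      proof (cases "i \<ge> length u")
        case True
        then have "drop i (u @ v) = drop (i - length u) v" by simp
        then have "i - length u \<in> ?A v" using i True by auto
        then have "i \<in> (\<lambda>i. i + length u) ` ?A v" using True
          by (metis (no_types, lifting) image_eqI le_add_diff_inverse2)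
        then show ?thesis by blast
      next
        case False2: False
        then show ?thesis using False by auto
      qed
    qed
  qed
  have "card (?A (u @ v)) \<le> card (?A u \<union> (\<lambda>i. i + length u) ` ?A v \<union> {length u - ?t ..< length u})"
    by (rule card_mono) (use fin sub in auto)
  also have "\<dots> \<le> card (?A u) + card ((\<lambda>i. i + length u) ` ?A v) + card {length u - ?t ..< length u}"
    by (meson add_le_mono card_Un_le le_refl order_trans)
  also have "\<dots> \<le> card (?A u) + card (?A v) + ?t"
    by (intro add_mono card_image_le fin) auto
  finally show ?thesis unfolding cnt_def .
qed

lemma cnt_concat_ge:
  assumes "length x \<ge> 1" shows "(\<Sum>w\<leftarrow>ws. cnt x w) \<le> cnt x (concat ws)"
proof (induction ws)
  case Nil then show ?case by simp
next
  case (Cons w ws)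
  then show ?case using cnt_append_ge[OF assms, of w "concat ws"] by simp
qed

lemma cnt_concat_le:
  assumes t1: "length x \<ge> 1" shows "cnt x (concat ws) \<le> (\<Sum>w\<leftarrow>ws. cnt x w) + length x * length ws"
proof (induction ws)
  case Nil then show ?case using t1 by (cases x) (auto simp: cnt_def)
next
  case (Cons w ws)
  then show ?case using cnt_append_le[of x w "concat ws"] by simp
qed

lemma cnt_word:
  assumes "length w = k" "length x \<le> k"
  shows "cnt x w = (\<Sum>i<k - length x + 1. if take (length x) (drop i w) = x then 1 else 0)"
proof -
  have "{i. i + length x \<le> length w \<and> take (length x) (drop i w) = x}
      = {..<k - length x + 1} \<inter> {i. take (length x) (drop i w) = x}" using assms by auto
  moreover have "(\<Sum>i<k - length x + 1. if take (length x) (drop i w) = x then 1 else 0)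
     = (\<Sum>i<k - length x + 1. of_bool (take (length x) (drop i w) = x) :: nat)"
    by (rule sum.cong) auto
  ultimately show ?thesis unfolding cnt_def by (simp only: sum_of_bool_eq finite_lessThan of_nat_id)
qed

lemma sum_cnt_words:
  assumes "length x \<le> k"
  shows "(\<Sum>w\<leftarrow>words k. cnt x w) = (k - length x + 1) * 2 ^ (k - length x)"
proof -
  let ?t = "length x"
  have "(\<Sum>w\<leftarrow>words k. cnt x w) = (\<Sum>w\<in>{w. length w = k}. cnt x w)" by (rule sum_words)
  also have "\<dots> = (\<Sum>w\<in>{w. length w = k}. \<Sum>i<k - ?t + 1. if take ?t (drop i w) = x then 1 else 0)"
    by (rule sum.cong) (use cnt_word assms in auto)
  also have "\<dots> = (\<Sum>i<k - ?t + 1. \<Sum>w\<in>{w. length w = k}. if take ?t (drop i w) = x then 1 else 0)"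
    by (rule sum.swap)
  also have "\<dots> = (\<Sum>i<k - ?t + 1. (2::nat) ^ (k - ?t))"
  proof (rule sum.cong)
    fix i assume "i \<in> {..<k - ?t + 1}"
    then have it: "i + ?t \<le> k" using assms by auto
    have "(\<Sum>w\<in>{w. length w = k}. if take ?t (drop i w) = x then 1 else 0)
        = card {w \<in> {w. length w = k}. take ?t (drop i w) = x}"
      by (simp add: sum.If_cases finite_len Collect_conj_eq)
    also have "\<dots> = card {w :: bool list. length w = k \<and> take ?t (drop i w) \<in> {x}}"
      by (rule arg_cong[where f=card]) auto
    also have "\<dots> = card {x} * 2 ^ (k - ?t)" by (rule card_pat) (use it in auto)
    finally show "(\<Sum>w\<in>{w. length w = k}. if take ?t (drop i w) = x then 1 else 0) = (2::nat) ^ (k - ?t)"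
      by simp
  qed simp
  also have "\<dots> = (k - ?t + 1) * 2 ^ (k - ?t)" by simp
  finally show ?thesis .
qed

lemma cnt_Bk_err:
  assumes t1: "length x \<ge> 1"
  shows "\<bar>real (cnt x (Bk k)) - real (k * 2 ^ k) / 2 ^ length x\<bar> \<le> real (length x) * 2 ^ k"
proof (cases "length x \<le> k")
  case True
  let ?t = "length x"
  have lo: "(k - ?t + 1) * 2 ^ (k - ?t) \<le> cnt x (Bk k)"
    using cnt_concat_ge[OF t1, of "words k"] sum_cnt_words[OF True] by (simp add: Bk_def)
  have hi: "cnt x (Bk k) \<le> (k - ?t + 1) * 2 ^ (k - ?t) + ?t * 2 ^ k"
    using cnt_concat_le[OF t1, of "words k"] sum_cnt_words[OF True] by (simp add: Bk_def length_words)
  have p: "(2::real) ^ k = 2 ^ (k - ?t) * 2 ^ ?t" using True by (simp add: power_add[symmetric])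
  have e: "real (k * 2 ^ k) / 2 ^ ?t = real k * 2 ^ (k - ?t)" using p by simp
  have r: "real ((k - ?t + 1) * 2 ^ (k - ?t)) = (real k - real ?t + 1) * 2 ^ (k - ?t)"
  proof -
    have r0: "real (k - ?t + 1) = real k - real ?t + 1" using True by (simp add: of_nat_diff)
    show ?thesis by (simp only: of_nat_mult r0 of_nat_power of_nat_numeral)
  qed
  have a: "(2::real) ^ (k - ?t) \<le> 2 ^ k" by simp
  have b: "(0::real) \<le> 2 ^ (k - ?t)" by simp
  from lo hi have lo': "(real k - real ?t + 1) * 2 ^ (k - ?t) \<le> real (cnt x (Bk k))"
    and hi': "real (cnt x (Bk k)) \<le> (real k - real ?t + 1) * 2 ^ (k - ?t) + real ?t * 2 ^ k"
    using r by (metis of_nat_le_iff, metis (mono_tags, opaque_lifting) of_nat_add of_nat_le_iff of_nat_mult of_nat_numeral of_nat_power)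
  have "(real ?t - 1) * 2 ^ (k - ?t) \<le> real ?t * 2 ^ k"
    using a t1 by (smt (verit, best) b mult_left_mono mult_right_mono of_nat_0_le_iff)
  moreover have f1: "(2::real) ^ (k - ?t) \<le> real ?t * 2 ^ (k - ?t)"
    using t1 b by (simp add: mult_le_cancel_right1)
  moreover have f2: "(real k - real ?t + 1) * 2 ^ (k - ?t) = real k * 2 ^ (k - ?t) - real ?t * 2 ^ (k - ?t) + 2 ^ (k - ?t)"
    by (simp add: algebra_simps)
  moreover have f3: "(real ?t - 1) * 2 ^ (k - ?t) = real ?t * 2 ^ (k - ?t) - 2 ^ (k - ?t)"
    by (simp add: algebra_simps)
  ultimately show ?thesis unfolding e abs_le_iff using lo' hi' a b f1 f2 f3
    by (smt (verit))
next
  case False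
  have c: "cnt x (Bk k) \<le> k * 2 ^ k" using cnt_le_len[OF t1, of "Bk k"] by (simp add: length_Bk)
  have d1: "real k * 2 ^ k / 2 ^ length x \<le> real k * 2 ^ k / 1"
    by (rule divide_left_mono) auto
  have d2: "real k * 2 ^ k \<le> real (length x) * 2 ^ k" using False by simp
  have d3: "real (cnt x (Bk k)) \<le> real k * 2 ^ k" using c
    by (metis of_nat_le_iff of_nat_mult of_nat_numeral of_nat_power)
  have d4: "0 \<le> real k * 2 ^ k / 2 ^ length x" by simp
  have d1': "real k * 2 ^ k / 2 ^ length x \<le> real k * 2 ^ k" using d1 by simp
  show ?thesis unfolding of_nat_mult of_nat_power of_nat_numeral
    using d1' d2 d3 d4 of_nat_0_le_iff[of "cnt x (Bk k)"] by (smt (verit))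
qed



lemma run_Cons': "run \<delta> \<nu> q (b # x) = (\<nu> q b @ fst (run \<delta> \<nu> (\<delta> q b) x), snd (run \<delta> \<nu> (\<delta> q b) x))"
  by (simp add: split_beta)

declare run.simps(2)[simp del]

lemma run_append:
  "run \<delta> \<nu> q (u @ v) = (fst (run \<delta> \<nu> q u) @ fst (run \<delta> \<nu> (snd (run \<delta> \<nu> q u)) v),
                          snd (run \<delta> \<nu> (snd (run \<delta> \<nu> q u)) v))"
  by (induction u arbitrary: q) (simp_all add: run_Cons')

lemma run_in_Q:
  assumes "\<forall>q\<in>Q. \<forall>b. \<delta> q b \<in> Q" "q \<in> Q"
  shows "snd (run \<delta> \<nu> q w) \<in> Q"
  using assms(2) by (induction w arbitrary: q) (simp_all add: run_Cons' assms(1))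

lemma card_short: "card {ys :: bool list. length ys < c} \<le> 2 ^ c"
proof (induction c)
  case 0 then show ?case by simp
next
  case (Suc c)
  have "{ys :: bool list. length ys < Suc c} = {ys. length ys < c} \<union> {ys. length ys = c}" by auto
  then have "card {ys :: bool list. length ys < Suc c} \<le> card {ys :: bool list. length ys < c} + card {ys :: bool list. length ys = c}"
    by (metis card_Un_le)
  then show ?case using Suc card_len[of c] by simp
qed

lemma finite_short: "finite {ys :: bool list. length ys < c}"
proof -
  have "{ys :: bool list. length ys < c} \<subseteq> (\<Union>i<c. {ys. length ys = i})" by auto
  then show ?thesis by (rule finite_subset) (simp add: finite_len)
qed

lemma chunks_concat:
  assumes "length w = a * l"
  shows "concat (map (\<lambda>p. take l (drop (p * l) w)) [0..<a]) = w"
  using assms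
proof (induction a arbitrary: w)
  case 0 then show ?case by simp
next
  case (Suc a)
  have "[0..<Suc a] = 0 # map Suc [0..<a]" by (simp add: upt_conv_Cons map_Suc_upt)
  then have "concat (map (\<lambda>p. take l (drop (p * l) w)) [0..<Suc a])
     = take l w @ concat (map (\<lambda>p. take l (drop (p * l) (drop l w))) [0..<a])"
    by (simp add: add.commute comp_def)
  also have "concat (map (\<lambda>p. take l (drop (p * l) (drop l w))) [0..<a]) = drop l w"
    by (rule Suc.IH) (use Suc.prems in simp)
  finally show ?case by simp
qed

locale ilfst =
  fixes Q q0 \<delta> \<nu>
  assumes il: "ILFST (Q, q0, \<delta>, \<nu>)"
begin

definition R where "R = range (\<lambda>u. snd (run \<delta> \<nu> q0 u))"

lemma finQ: "finite Q" and q0Q: "q0 \<in> Q" and dQ: "\<forall>q\<in>Q. \<forall>b. \<delta> q b \<in> Q"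
  using il by (auto simp: ILFST_def is_fst_def)

lemma R_Q: "R \<subseteq> Q" using run_in_Q[OF dQ q0Q] by (auto simp: R_def)

lemma R_step: assumes "q \<in> R" shows "snd (run \<delta> \<nu> q w) \<in> R"
proof -
  obtain u where u: "q = snd (run \<delta> \<nu> q0 u)" using assms by (auto simp: R_def)
  have "snd (run \<delta> \<nu> q w) = snd (run \<delta> \<nu> q0 (u @ w))" unfolding run_append u by simp
  then show ?thesis unfolding R_def by blast
qed

lemma inj_R: assumes "q \<in> R" shows "inj (run \<delta> \<nu> q)"
proof (rule injI)
  fix w1 w2 assume e: "run \<delta> \<nu> q w1 = run \<delta> \<nu> q w2"
  obtain u where u: "q = snd (run \<delta> \<nu> q0 u)" using assms by (auto simp: R_def)
  have "run \<delta> \<nu> q0 (u @ w1) = run \<delta> \<nu> q0 (u @ w2)"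
    unfolding run_append using e u by simp
  moreover have "inj (\<lambda>x. (fst_out (Q, q0, \<delta>, \<nu>) x, fst_state (Q, q0, \<delta>, \<nu>) x))"
    using il by (simp add: ILFST_def)
  then have "\<forall>x y. run \<delta> \<nu> q0 x = run \<delta> \<nu> q0 y \<longrightarrow> x = y"
    unfolding fst_out_def fst_state_def inj_def by simp
  ultimately have "u @ w1 = u @ w2" by blast
  then show "w1 = w2" by simp
qed

definition Bad :: "nat \<Rightarrow> nat \<Rightarrow> bool list set" where
  "Bad l d = {w. length w = l \<and> (\<exists>q\<in>R. length (fst (run \<delta> \<nu> q w)) + d < l)}"

lemma card_Bq:
  assumes "q \<in> R"
  shows "card {w :: bool list. length w = l \<and> length (fst (run \<delta> \<nu> q w)) + d < l} \<le> card Q * 2 ^ (l - d)"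
proof -
  let ?B = "{w :: bool list. length w = l \<and> length (fst (run \<delta> \<nu> q w)) + d < l}"
  have sub: "run \<delta> \<nu> q ` ?B \<subseteq> {ys. length ys < l - d} \<times> Q"
  proof (rule image_subsetI)
    fix w assume w: "w \<in> ?B"
    have "snd (run \<delta> \<nu> q w) \<in> Q" using run_in_Q[OF dQ] R_Q assms by auto
    moreover have "length (fst (run \<delta> \<nu> q w)) < l - d" using w by auto
    ultimately show "run \<delta> \<nu> q w \<in> {ys. length ys < l - d} \<times> Q" by (simp add: mem_Times_iff)
  qed
  have inj: "inj_on (run \<delta> \<nu> q) ?B" using inj_R[OF assms] by (simp add: inj_on_def inj_def)
  have fin: "finite ({ys :: bool list. length ys < l - d} \<times> Q)" using finQ finite_short by simp
  have "card ?B \<le> card ({ys :: bool list. length ys < l - d} \<times> Q)"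
    by (rule card_inj_on_le[OF inj sub fin])
  also have "\<dots> \<le> 2 ^ (l - d) * card Q" using card_short by (simp add: card_cartesian_product)
  finally show ?thesis by (simp add: mult.commute)
qed

lemma card_Bad: "card (Bad l d) \<le> card Q * card Q * 2 ^ (l - d)"
proof -
  have "Bad l d = (\<Union>q\<in>R. {w :: bool list. length w = l \<and> length (fst (run \<delta> \<nu> q w)) + d < l})"
    by (auto simp: Bad_def)
  then have "card (Bad l d) \<le> (\<Sum>q\<in>R. card {w :: bool list. length w = l \<and> length (fst (run \<delta> \<nu> q w)) + d < l})"
    by (simp add: card_UN_le finite_subset[OF R_Q finQ])
  also have "\<dots> \<le> (\<Sum>q\<in>R. card Q * 2 ^ (l - d))" by (rule sum_mono) (rule card_Bq)
  also have "\<dots> = card R * (card Q * 2 ^ (l - d))" by simp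
  also have "\<dots> \<le> card Q * (card Q * 2 ^ (l - d))"
    by (rule mult_right_mono) (auto intro: card_mono[OF finQ R_Q])
  finally show ?thesis by simp
qed

lemma out_chunks:
  assumes "q \<in> R" "\<forall>c\<in>set cs. length c = l"
  shows "(l - d) * length (filter (\<lambda>c. c \<notin> Bad l d) cs) \<le> length (fst (run \<delta> \<nu> q (concat cs)))"
  using assms
proof (induction cs arbitrary: q)
  case Nil then show ?case by simp
next
  case (Cons c cs)
  have q': "snd (run \<delta> \<nu> q c) \<in> R" by (rule R_step[OF Cons.prems(1)])
  have IH: "(l - d) * length (filter (\<lambda>c. c \<notin> Bad l d) cs) \<le> length (fst (run \<delta> \<nu> (snd (run \<delta> \<nu> q c)) (concat cs)))"
    using Cons.IH[OF q'] Cons.prems by simp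
  have "c \<notin> Bad l d \<Longrightarrow> l - d \<le> length (fst (run \<delta> \<nu> q c))"
    using Cons.prems unfolding Bad_def by auto
  then show ?case using IH by (auto simp: run_append)
qed

end



lemma concat_concat': "concat (concat xss) = concat (map concat xss)"
  by (induction xss) auto

lemma sum_list_concat': "sum_list (concat xss) = sum_list (map sum_list (xss :: nat list list))"
  by (induction xss) auto

lemma length_filter_sum: "length (filter P xs) = (\<Sum>x\<leftarrow>xs. of_bool (P x) :: nat)"
  by (induction xs) auto

context ilfst
begin

lemma out_Bk:
  assumes q: "q \<in> R" and k: "k = a * l" and dl: "8 * d \<le> l" and Qd: "8 * (card Q * card Q) \<le> 2 ^ d"
  shows "49 * length (Bk k) \<le> 64 * length (fst (run \<delta> \<nu> q (Bk k)))"
proof -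
  define ch :: "bool list \<Rightarrow> nat \<Rightarrow> bool list" where "ch = (\<lambda>w p. take l (drop (p * l) w))"
  define CH where "CH = concat (map (\<lambda>w. map (ch w) [0..<a]) (words k))"
  have cat: "concat CH = Bk k"
  proof -
    have "concat CH = concat (map (\<lambda>w. concat (map (ch w) [0..<a])) (words k))"
      by (simp add: CH_def concat_concat' comp_def)
    also have "\<dots> = concat (map (\<lambda>w. w) (words k))"
      by (rule arg_cong[where f=concat], rule map_cong) (auto simp: ch_def set_words k intro: chunks_concat)
    finally show ?thesis by (simp add: Bk_def)
  qed
  have lens: "\<forall>c\<in>set CH. length c = l"
  proof
    fix c assume "c \<in> set CH"
    then obtain w p where w: "length w = k" and p: "p < a" and c: "c = ch w p"
      by (auto simp: CH_def set_words)
    have "p * l + l \<le> a * l" using p by (metis Suc_leI add.commute mult_Suc mult_le_mono1)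
    then show "length c = l" using w c k by (simp add: ch_def)
  qed
  have lenCH: "length CH = a * 2 ^ k"
    by (simp add: CH_def length_concat comp_def sum_list_triv length_words)
  have badc: "length (filter (\<lambda>c. c \<in> Bad l d) CH) = a * (card (Bad l d) * 2 ^ (k - l))"
  proof -
    have "length (filter (\<lambda>c. c \<in> Bad l d) CH) = (\<Sum>w\<leftarrow>words k. \<Sum>p\<leftarrow>[0..<a]. of_bool (ch w p \<in> Bad l d))"
      by (simp add: CH_def length_filter_sum map_concat sum_list_concat' comp_def)
    also have "\<dots> = (\<Sum>w\<in>{w. length w = k}. \<Sum>p<a. of_bool (ch w p \<in> Bad l d))"
      by (simp add: sum_words sum_list_distinct_conv_sum_set atLeast0LessThan)
    also have "\<dots> = (\<Sum>p<a. \<Sum>w\<in>{w. length w = k}. of_bool (ch w p \<in> Bad l d))"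
      by (rule sum.swap)
    also have "\<dots> = (\<Sum>p<a. card (Bad l d) * 2 ^ (k - l))"
    proof (rule sum.cong)
      fix p assume p: "p \<in> {..<a}"
      have "(\<Sum>w\<in>{w. length w = k}. of_bool (ch w p \<in> Bad l d)) = card ({w :: bool list. length w = k} \<inter> {w. ch w p \<in> Bad l d})"
        by (simp add: finite_len)
      also have "\<dots> = card {w :: bool list. length w = k \<and> take l (drop (p * l) w) \<in> Bad l d}"
        by (simp add: ch_def Collect_conj_eq)
      also have "\<dots> = card (Bad l d) * 2 ^ (k - l)"
      proof (rule card_pat)
        show "\<forall>a\<in>Bad l d. length a = l" by (simp add: Bad_def)
        show "p * l + l \<le> k" using p k
          by (metis Suc_leI add.commute lessThan_iff mult_Suc mult_le_mono1)
      qed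
      finally show "(\<Sum>w\<in>{w. length w = k}. of_bool (ch w p \<in> Bad l d)) = card (Bad l d) * 2 ^ (k - l)" .
    qed simp
    finally show ?thesis by simp
  qed
  have dlk: "d \<le> l" using dl by simp
  show ?thesis
  proof (cases "a = 0")
    case True then show ?thesis using k by (simp add: length_Bk)
  next
    case False
    then have lk: "l \<le> k" using k by simp
    have "card (Bad l d) * 2 ^ (k - l) \<le> card Q * card Q * 2 ^ (l - d) * 2 ^ (k - l)"
      using card_Bad by simp
    also have "\<dots> = card Q * card Q * 2 ^ (k - d)"
      using lk dlk by (simp add: power_add[symmetric])
    finally have c0: "card (Bad l d) * 2 ^ (k - l) \<le> card Q * card Q * 2 ^ (k - d)" .
    have c1: "8 * (card (Bad l d) * 2 ^ (k - l)) \<le> 8 * (card Q * card Q) * 2 ^ (k - d)"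
      using c0 by (simp add: mult.assoc)
    have c2: "8 * (card Q * card Q) * 2 ^ (k - d) \<le> 2 ^ d * 2 ^ (k - d)"
      using Qd by (rule mult_le_mono1)
    from c1 c2 have b1: "8 * (card (Bad l d) * 2 ^ (k - l)) \<le> 2 ^ d * 2 ^ (k - d)" by (rule le_trans)
    have "(2::nat) ^ d * 2 ^ (k - d) = 2 ^ k" using lk dlk by (simp add: power_add[symmetric])
    with b1 have b2: "8 * length (filter (\<lambda>c. c \<in> Bad l d) CH) \<le> a * 2 ^ k"
      unfolding badc by (metis mult.left_commute mult_le_mono2)
    have comp: "length (filter (\<lambda>c. c \<in> Bad l d) CH) + length (filter (\<lambda>c. c \<notin> Bad l d) CH) = a * 2 ^ k"
      using sum_length_filter_compl[of "\<lambda>c. c \<in> Bad l d" CH] lenCH by simp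
    have good: "7 * (a * 2 ^ k) \<le> 8 * length (filter (\<lambda>c. c \<notin> Bad l d) CH)"
      using b2 comp by linarith
    have out: "(l - d) * length (filter (\<lambda>c. c \<notin> Bad l d) CH) \<le> length (fst (run \<delta> \<nu> q (Bk k)))"
      using out_chunks[OF q lens, of d] cat by simp
    have ld: "7 * l \<le> 8 * (l - d)" using dl by simp
    have "49 * length (Bk k) = (7 * l) * (7 * (a * 2 ^ k))" by (simp add: length_Bk k)
    also have "\<dots> \<le> (8 * (l - d)) * (8 * length (filter (\<lambda>c. c \<notin> Bad l d) CH))"
      by (rule mult_le_mono[OF ld good])
    also have "\<dots> = 64 * ((l - d) * length (filter (\<lambda>c. c \<notin> Bad l d) CH))" by simp
    also have "\<dots> \<le> 64 * length (fst (run \<delta> \<nu> q (Bk k)))" using out by simp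
    finally show ?thesis .
  qed
qed

lemma exists_a0:
  "\<exists>a0. \<forall>j\<ge>a0. \<forall>q\<in>R. 3 * length (Bk (2 ^ j)) \<le> 4 * length (fst (run \<delta> \<nu> q (Bk (2 ^ j))))"
proof -
  define d where "d = 8 * (card Q * card Q)"
  define a0 where "a0 = 8 * d"
  have Qd: "8 * (card Q * card Q) \<le> 2 ^ d" unfolding d_def by (simp add: less_imp_le_nat less_exp)
  have dl: "8 * d \<le> 2 ^ a0" unfolding a0_def by (simp add: less_imp_le_nat less_exp)
  show ?thesis
  proof (intro exI allI impI ballI)
    fix j q assume j: "a0 \<le> j" and q: "q \<in> R"
    have k: "(2::nat) ^ j = 2 ^ (j - a0) * 2 ^ a0" using j by (simp add: power_add[symmetric])
    have "49 * length (Bk (2 ^ j)) \<le> 64 * length (fst (run \<delta> \<nu> q (Bk (2 ^ j))))"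
      by (rule out_Bk[OF q k dl Qd])
    then show "3 * length (Bk (2 ^ j)) \<le> 4 * length (fst (run \<delta> \<nu> q (Bk (2 ^ j))))" by linarith
  qed
qed

lemma out_blocks:
  assumes a0: "\<forall>j\<ge>a0. \<forall>q\<in>R. 3 * length (Bk (2 ^ j)) \<le> 4 * length (fst (run \<delta> \<nu> q (Bk (2 ^ j))))"
    and js: "\<forall>j\<in>set js. a0 \<le> j" and q: "q \<in> R"
  shows "3 * length (concat (map (\<lambda>j. Bk (2 ^ j)) js)) \<le> 4 * length (fst (run \<delta> \<nu> q (concat (map (\<lambda>j. Bk (2 ^ j)) js))))"
  using js q
proof (induction js arbitrary: q)
  case Nil then show ?case by simp
next
  case (Cons j js)
  have q': "snd (run \<delta> \<nu> q (Bk (2 ^ j))) \<in> R" by (rule R_step[OF Cons.prems(2)])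
  have IH: "3 * length (concat (map (\<lambda>j. Bk (2 ^ j)) js)) \<le> 4 * length (fst (run \<delta> \<nu> (snd (run \<delta> \<nu> q (Bk (2 ^ j)))) (concat (map (\<lambda>j. Bk (2 ^ j)) js))))"
    using Cons.IH[OF _ q'] Cons.prems by simp
  have h: "3 * length (Bk (2 ^ j)) \<le> 4 * length (fst (run \<delta> \<nu> q (Bk (2 ^ j))))"
    using a0 Cons.prems by simp
  show ?case using IH h by (simp add: run_append)
qed

end



declare bin.simps[simp del]

lemma bin_0[simp]: "bin 0 = []" by (simp add: bin.simps)
lemma bin_pos: "n > 0 \<Longrightarrow> bin n = bin (n div 2) @ [odd n]" by (simp add: bin.simps)

lemma bin_len_le: "length (bin n) \<le> n"
proof (induction n rule: bin.induct)
  case (1 n)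
  show ?case
  proof (cases "n = 0")
    case False
    then have "length (bin n) = length (bin (n div 2)) + 1" by (simp add: bin_pos)
    moreover have "length (bin (n div 2)) \<le> n div 2" using 1 False by simp
    ultimately show ?thesis using False by linarith
  qed simp
qed

lemma bin_lt: "n < 2 ^ length (bin n)"
proof (induction n rule: bin.induct)
  case (1 n)
  show ?case
  proof (cases "n = 0")
    case False
    then have "length (bin n) = length (bin (n div 2)) + 1" by (simp add: bin_pos)
    moreover have "n div 2 < 2 ^ length (bin (n div 2))" using 1 False by simp
    ultimately show ?thesis by simp
  qed simp
qed

lemma bin_le_pow: "m < 2 ^ k \<Longrightarrow> length (bin m) \<le> k"
proof (induction m arbitrary: k rule: bin.induct)
  case (1 m)
  show ?case
  proof (cases "m = 0")
    case False
    then obtain k' where k: "k = Suc k'" using 1(2) by (cases k) auto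
    have "m div 2 < 2 ^ k'" using 1(2) k by simp
    then have "length (bin (m div 2)) \<le> k'" using 1(1) False by simp
    then show ?thesis using False k by (simp add: bin_pos)
  qed simp
qed

lemma bin_mono: "m \<le> n \<Longrightarrow> length (bin m) \<le> length (bin n)"
  using bin_le_pow bin_lt le_less_trans by blast

lemma bin_log: "n > 0 \<Longrightarrow> 2 ^ length (bin n) \<le> 2 * n"
proof (induction n rule: bin.induct)
  case (1 n)
  have l: "length (bin n) = length (bin (n div 2)) + 1" using 1(2) by (simp add: bin_pos)
  show ?case
  proof (cases "n div 2 = 0")
    case True
    then have "n = 1" using 1(2) by linarith
    then show ?thesis by (simp add: bin_pos)
  next
    case False
    then have "2 ^ length (bin (n div 2)) \<le> 2 * (n div 2)" using 1 by simp
    then show ?thesis using l by simp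
  qed
qed

lemma len_code_idx: "length (code_idx j) \<le> 3 * length (bin j) + 2"
proof -
  have "length (concat (map (\<lambda>b. [b, b]) xs)) = 2 * length xs" for xs :: "bool list"
    by (induction xs) auto
  then have "length (code_idx j) = 2 * length (bin (length (bin j))) + 2 + length (bin j)"
    by (simp add: code_idx_def self_delim_def)
  then show ?thesis using bin_len_le[of "length (bin j)"] by simp
qed

fun ph :: "bool list list \<Rightarrow> bool list \<Rightarrow> bool list \<Rightarrow> bool list list" where
  "ph D cur [] = (if cur = [] then [] else [cur])"
| "ph D cur (b # w) = (if cur @ [b] \<in> set D then ph D (cur @ [b]) w else (cur @ [b]) # ph (D @ [cur @ [b]]) [] w)"

lemma len_lz_ph: "length (lz_aux D cur w) = length (ph D cur w)"
  by (induction D cur w rule: ph.induct) auto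

lemma concat_ph: "concat (ph D cur w) = cur @ w"
  by (induction D cur w rule: ph.induct) auto

lemma ph_nonempty: "\<forall>p\<in>set (ph D cur w). p \<noteq> []"
  by (induction D cur w rule: ph.induct) auto

lemma ph_distinct: "distinct (butlast (ph D cur w)) \<and> (\<forall>p\<in>set (butlast (ph D cur w)). p \<notin> set D)"
proof (induction D cur w rule: ph.induct)
  case (1 D cur) then show ?case by auto
next
  case (2 D cur b w)
  show ?case
  proof (cases "cur @ [b] \<in> set D")
    case True then show ?thesis using 2 by simp
  next
    case False
    let ?r = "ph (D @ [cur @ [b]]) [] w"
    have IH: "distinct (butlast ?r) \<and> (\<forall>p\<in>set (butlast ?r). p \<notin> set (D @ [cur @ [b]]))"
      using 2(2) False by simp
    have "butlast ((cur @ [b]) # ?r) = (if ?r = [] then [] else (cur @ [b]) # butlast ?r)" by simp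
    then show ?thesis using IH False by auto
  qed
qed

lemma idx_lt: "p \<in> set D \<Longrightarrow> idx D p < length D"
  unfolding idx_def by (metis (mono_tags, lifting) LeastI in_set_conv_nth)

lemma lz_idx_bound:
  assumes "[] \<in> set D" "cur \<in> set D" "cur \<noteq> [] \<longrightarrow> butlast cur \<in> set D"
  shows "\<forall>(l, c)\<in>set (lz_aux D cur w). l < length D + length (lz_aux D cur w)"
  using assms
proof (induction D cur w rule: lz_aux.induct)
  case (1 D cur)
  show ?case
  proof (cases "cur = []")
    case False
    then have "idx D (butlast cur) < length D" using 1 idx_lt by auto
    then show ?thesis using False by simp
  qed simp
next
  case (2 D cur b w)
  show ?case
  proof (cases "cur @ [b] \<in> set D")
    case True then show ?thesis using 2 by simp
  next
    case False
    have IH: "\<forall>(l, c)\<in>set (lz_aux (D @ [cur @ [b]]) [] w). l < length (D @ [cur @ [b]]) + length (lz_aux (D @ [cur @ [b]]) [] w)"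
      using 2(2)[OF False] 2(3) by simp
    then show ?thesis using False idx_lt[OF 2(4)] by auto
  qed
qed

lemma length_ph_le: "length (ph D [] w) \<le> length w"
proof -
  have "length ps \<le> length (concat ps)" if "\<forall>p\<in>set ps. p \<noteq> []" for ps :: "bool list list"
  using that proof (induction ps)
    case (Cons a ps)
    then have "length ps \<le> length (concat ps)" "length a \<ge> 1" by (auto simp: Suc_leI)
    then show ?case by simp
  qed simp
  moreover have "concat (ph D [] w) = w" using concat_ph[of D "[]" w] by simp
  ultimately show ?thesis using ph_nonempty[of D "[]" w] by metis
qed

lemma LZ_length:
  "length (LZ x) \<le> length (ph [[]] [] x) * (3 * length (bin (length x)) + 3)"
proof -
  let ?ps = "lz_aux [[]] [] x"
  have bnd: "\<forall>(l, b)\<in>set ?ps. l < 1 + length ?ps"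
    using lz_idx_bound[of "[[]]" "[]" x] by simp
  have lps: "length ?ps \<le> length x" using len_lz_ph length_ph_le by metis
  have each: "length (code_idx l @ [b]) \<le> 3 * length (bin (length x)) + 3" if "(l, b) \<in> set ?ps" for l b
  proof -
    have "l \<le> length x" using bnd that lps by fastforce
    then have "length (bin l) \<le> length (bin (length x))" by (rule bin_mono)
    then show ?thesis using len_code_idx[of l] by simp
  qed
  have "length (LZ x) = (\<Sum>(l, b)\<leftarrow>?ps. length (code_idx l @ [b]))"
    unfolding LZ_def length_concat map_map by (rule arg_cong[where f=sum_list], rule map_cong) auto
  also have "\<dots> \<le> (\<Sum>(l, b)\<leftarrow>?ps. 3 * length (bin (length x)) + 3)"
    by (rule sum_list_mono) (use each in auto)
  also have "\<dots> = length ?ps * (3 * length (bin (length x)) + 3)"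
  proof -
    have "(\<Sum>(l, b)\<leftarrow>ps. (c::nat)) = length ps * c" for ps :: "(nat \<times> bool) list" and c
      by (induction ps) auto
    then show ?thesis .
  qed
  finally show ?thesis using len_lz_ph by metis
qed



definition fac :: "nat \<Rightarrow> bool list \<Rightarrow> bool list set" where
  "fac t x = (\<lambda>i. take t (drop i x)) ` {i. i + t \<le> length x}"

lemma fac_finite: "finite (fac t x)"
  unfolding fac_def by (rule finite_imageI, rule finite_subset[of _ "{..length x}"]) auto

lemma factor_of_concat:
  assumes "p \<in> set ps" shows "p \<in> fac (length p) (concat ps)"
proof -
  obtain as bs where ps: "ps = as @ p # bs" using assms by (meson split_list)
  let ?i = "length (concat as)"
  have "take (length p) (drop ?i (concat ps)) = p" by (simp add: ps)
  moreover have "?i + length p \<le> length (concat ps)" by (simp add: ps)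
  ultimately show ?thesis unfolding fac_def by (metis (mono_tags, lifting) image_eqI mem_Collect_eq)
qed

lemma sum_filter_le: "(\<Sum>p\<leftarrow>filter P xs. f p) \<le> (\<Sum>p\<leftarrow>xs. (f p :: nat))"
  by (induction xs) auto

lemma len_filter_long:
  assumes "\<forall>p\<in>set xs. T < length p"
  shows "(T + 1) * length xs \<le> (\<Sum>p\<leftarrow>xs. length p)"
  using assms by (induction xs) auto

lemma phrase_count:
  assumes cat: "concat ps = x" and ne: "\<forall>p\<in>set ps. p \<noteq> []" and dis: "distinct (butlast ps)"
  shows "real (length ps) \<le> 1 + real (\<Sum>t\<in>{1..T}. card (fac t x)) + real (length x) / real (T + 1)"
proof -
  let ?bs = "butlast ps"
  let ?sh = "filter (\<lambda>p. length p \<le> T) ?bs"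
  let ?lo = "filter (\<lambda>p. \<not> length p \<le> T) ?bs"
  have l1: "length ps \<le> length ?bs + 1" by simp
  have l2: "length ?bs = length ?sh + length ?lo" by (simp add: sum_length_filter_compl)
  have sub: "set ?sh \<subseteq> (\<Union>t\<in>{1..T}. fac t x)"
  proof
    fix p assume p: "p \<in> set ?sh"
    then have pin: "p \<in> set ps" by (auto dest: in_set_butlastD)
    then have "p \<noteq> []" using ne by auto
    then have "length p \<in> {1..T}" using p by (auto simp: Suc_leI)
    moreover have "p \<in> fac (length p) x" using factor_of_concat[OF pin] cat by simp
    ultimately show "p \<in> (\<Union>t\<in>{1..T}. fac t x)" by blast
  qed
  have "distinct ?sh" using dis by simp
  then have "length ?sh = card (set ?sh)" by (metis distinct_card)
  also have "\<dots> \<le> card (\<Union>t\<in>{1..T}. fac t x)"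
    by (rule card_mono[OF _ sub]) (simp add: fac_finite)
  also have "\<dots> \<le> (\<Sum>t\<in>{1..T}. card (fac t x))" by (rule card_UN_le) simp
  finally have s: "length ?sh \<le> (\<Sum>t\<in>{1..T}. card (fac t x))" .
  have "(T + 1) * length ?lo \<le> (\<Sum>p\<leftarrow>?lo. length p)" by (rule len_filter_long) auto
  also have "\<dots> \<le> (\<Sum>p\<leftarrow>?bs. length p)" by (rule sum_filter_le)
  also have "\<dots> \<le> (\<Sum>p\<leftarrow>ps. length p)"
  proof -
    show ?thesis
    proof (cases "ps = []")
      case False
      then have "ps = ?bs @ [last ps]" by simp
      then have "(\<Sum>p\<leftarrow>ps. length p) = (\<Sum>p\<leftarrow>?bs. length p) + length (last ps)"
        by (metis (no_types, lifting) list.map(1) list.map(2) map_append sum_list.Cons sum_list.Nil sum_list_append add_0_right)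
      then show ?thesis by simp
    qed simp
  qed
  also have "\<dots> = length x" using cat length_concat[of ps] by simp
  finally have lo: "(T + 1) * length ?lo \<le> length x" .
  then have "real (T + 1) * real (length ?lo) \<le> real (length x)" by (metis of_nat_le_iff of_nat_mult)
  then have lo': "real (length ?lo) \<le> real (length x) / real (T + 1)"
    by (simp add: field_simps del: of_nat_Suc)
  have "real (length ps) \<le> real (length ?sh) + real (length ?lo) + 1" using l1 l2 by simp
  then show ?thesis using s lo' by (smt (verit) of_nat_le_iff)
qed

lemma fac_take: "fac t (take n x) \<subseteq> fac t x"
proof
  fix y assume "y \<in> fac t (take n x)"
  then obtain i where i: "i + t \<le> length (take n x)" and y: "y = take t (drop i (take n x))"
    unfolding fac_def by auto
  have i1: "i + t \<le> n" "i + t \<le> length x" using i by auto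
  then have "y = take t (drop i x)" using y by (simp add: drop_take take_take min_def)
  moreover have "i + t \<le> length x" using i1 by simp
  ultimately show "y \<in> fac t x" unfolding fac_def by blast
qed

lemma fac_append: "card (fac t (u @ v)) \<le> card (fac t u) + card (fac t v) + t"
proof -
  have sub: "fac t (u @ v) \<subseteq> fac t u \<union> fac t v \<union> (\<lambda>i. take t (drop i (u @ v))) ` {length u - t..<length u}"
  proof
    fix y assume "y \<in> fac t (u @ v)"
    then obtain i where i: "i + t \<le> length (u @ v)" and y: "y = take t (drop i (u @ v))"
      unfolding fac_def by auto
    show "y \<in> fac t u \<union> fac t v \<union> (\<lambda>i. take t (drop i (u @ v))) ` {length u - t..<length u}"
    proof (cases "i + t \<le> length u")
      case True
      then have "y = take t (drop i u)" using y by simp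
      then show ?thesis using True unfolding fac_def by blast
    next
      case False
      show ?thesis
      proof (cases "length u \<le> i")
        case True
        then have "y = take t (drop (i - length u) v)" using y by simp
        moreover have "i - length u + t \<le> length v" using i True by simp
        ultimately show ?thesis unfolding fac_def by blast
      next
        case False2: False
        then have "i \<in> {length u - t..<length u}" using False by auto
        then show ?thesis using y by blast
      qed
    qed
  qed
  have "card (fac t (u @ v)) \<le> card (fac t u \<union> fac t v \<union> (\<lambda>i. take t (drop i (u @ v))) ` {length u - t..<length u})"
    by (rule card_mono[OF _ sub]) (simp add: fac_finite)
  also have "\<dots> \<le> card (fac t u) + card (fac t v) + card ((\<lambda>i. take t (drop i (u @ v))) ` {length u - t..<length u})"
    by (meson add_le_mono card_Un_le le_refl order_trans)
  also have "\<dots> \<le> card (fac t u) + card (fac t v) + t"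
    using card_image_le[of "{length u - t..<length u}" "\<lambda>i. take t (drop i (u @ v))"] by simp
  finally show ?thesis .
qed

lemma fac_rep:
  assumes B: "B \<noteq> []"
  shows "card (fac t (concat (replicate r B))) \<le> length B"
proof -
  let ?X = "concat (replicate r B)"
  have key: "\<And>i. i + t \<le> length ?X \<Longrightarrow> \<exists>j<length B. take t (drop i ?X) = take t (drop j ?X)"
  proof -
    fix i show "i + t \<le> length ?X \<Longrightarrow> \<exists>j<length B. take t (drop i ?X) = take t (drop j ?X)"
    proof (induction i rule: less_induct)
      case (less i)
      show ?case
      proof (cases "i < length B")
        case True then show ?thesis by blast
      next
        case False
        then obtain r' where r: "r = Suc r'" using less.prems B by (cases r) auto
        have X1: "?X = B @ concat (replicate r' B)" using r by simp
        have X2: "?X = concat (replicate r' B) @ B" using r by (simp add: replicate_append_same[symmetric])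
        have l: "i - length B + t \<le> length (concat (replicate r' B))" using less.prems False X1 by simp
        have "take t (drop i ?X) = take t (drop (i - length B) (concat (replicate r' B)))"
          using False X1 by (simp add: drop_append)
        also have "\<dots> = take t (drop (i - length B) ?X)"
          using l X2 by (simp add: drop_append take_append)
        finally have e: "take t (drop i ?X) = take t (drop (i - length B) ?X)" .
        have "0 < length B" using B by simp
        then have "i - length B < i" using False by arith
        moreover have "i - length B + t \<le> length ?X" using less.prems by simp
        ultimately obtain j where "j < length B" "take t (drop (i - length B) ?X) = take t (drop j ?X)"
          using less.IH by blast
        then show ?thesis using e by auto
      qed
    qed
  qed
  have "fac t ?X \<subseteq> (\<lambda>j. take t (drop j ?X)) ` {..<length B}"
    unfolding fac_def using key by blast
  then have "card (fac t ?X) \<le> card ((\<lambda>j. take t (drop j ?X)) ` {..<length B})"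
    by (rule card_mono[rotated]) simp
  also have "\<dots> \<le> length B" using card_image_le[of "{..<length B}"] by simp
  finally show ?thesis .
qed



definition Bj :: "nat \<Rightarrow> bool list" where "Bj j = Bk (2 ^ j)"
definition mm :: "nat \<Rightarrow> nat" where "mm j = 2 ^ j * 2 ^ (2 ^ j)"
definition rr :: "nat \<Rightarrow> nat" where "rr j = mm (Suc j) * mm (Suc j)"
definition seg :: "nat \<Rightarrow> bool list" where "seg j = concat (replicate (rr j) (Bj j))"
definition pre :: "nat \<Rightarrow> bool list" where "pre J = concat (map seg [0..<J])"
definition Sq :: "nat \<Rightarrow> bool" where "Sq i = pre (Suc i) ! i"

lemma len_Bj: "length (Bj j) = mm j" by (simp add: Bj_def mm_def length_Bk)
lemma mm_pos: "1 \<le> mm j" by (simp add: mm_def)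
lemma Bj_ne: "Bj j \<noteq> []" using len_Bj[of j] mm_pos[of j] by auto
lemma rr_pos: "1 \<le> rr j" using mm_pos[of "Suc j"] by (simp add: rr_def)

lemma len_seg: "length (seg j) = rr j * mm j"
  by (simp add: seg_def length_concat len_Bj sum_list_replicate)

lemma seg_ge: "1 \<le> length (seg j)"
proof -
  have "1 * 1 \<le> rr j * mm j" by (rule mult_le_mono[OF rr_pos mm_pos])
  then show ?thesis by (simp add: len_seg)
qed

lemma pre_Suc: "pre (Suc J) = pre J @ seg J" by (simp add: pre_def)

lemma len_pre_Suc: "length (pre (Suc J)) = length (pre J) + rr J * mm J"
  by (simp add: pre_Suc len_seg)

lemma len_pre_ge: "J \<le> length (pre J)"
proof (induction J)
  case (Suc J) then show ?case using seg_ge[of J] by (simp add: pre_Suc)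
qed (simp add: pre_def)

lemma pre_add: "pre (J + d) = pre J @ concat (map seg [J..<J + d])"
proof -
  have "[0..<J + d] = [0..<J] @ [J..<J + d]" by (rule upt_add_eq_append) simp
  then show ?thesis unfolding pre_def by (simp only: map_append concat_append)
qed

lemma pre_prefix: "J \<le> J' \<Longrightarrow> \<exists>z. pre J' = pre J @ z"
  using pre_add[of J "J' - J"] by auto

lemma pre_mono_len: "J \<le> J' \<Longrightarrow> length (pre J) \<le> length (pre J')"
  using pre_prefix by fastforce

lemma pre_strict: "J < J' \<Longrightarrow> length (pre J) < length (pre J')"
proof -
  assume "J < J'"
  then have "length (pre (Suc J)) \<le> length (pre J')" by (simp add: pre_mono_len)
  moreover have "seg J \<noteq> []" using seg_ge[of J] by (cases "seg J") auto
  then have "length (pre J) < length (pre (Suc J))" by (simp add: pre_Suc)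
  ultimately show ?thesis by simp
qed

lemma Sq_nth: assumes b: "i < length (pre J)" shows "Sq i = pre J ! i"
proof -
  obtain z1 where z1: "pre (max J (Suc i)) = pre (Suc i) @ z1" using pre_prefix[of "Suc i" "max J (Suc i)"] by auto
  obtain z2 where z2: "pre (max J (Suc i)) = pre J @ z2" using pre_prefix[of J "max J (Suc i)"] by auto
  have a: "i < length (pre (Suc i))" using len_pre_ge[of "Suc i"] by simp
  have "Sq i = pre (max J (Suc i)) ! i" unfolding Sq_def z1 using a by (simp add: nth_append)
  also have "\<dots> = pre J ! i" unfolding z2 using b by (simp add: nth_append)
  finally show ?thesis .
qed

lemma prefix_Sq: assumes "n \<le> length (pre J)" shows "prefix Sq n = take n (pre J)"
proof -
  have "map Sq [0..<n] = map (\<lambda>i. pre J ! i) [0..<n]"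
    by (rule map_cong) (use assms Sq_nth in auto)
  also have "\<dots> = take n (pre J)" using assms by (intro nth_equalityI) auto
  finally show ?thesis by (simp add: prefix_def)
qed

lemma seg_split:
  assumes "q < rr j" "s < mm j"
  shows "take (q * mm j + s) (seg j) = concat (replicate q (Bj j)) @ take s (Bj j)"
proof -
  have r: "rr j = q + Suc (rr j - q - 1)" using assms by simp
  have "replicate (rr j) (Bj j) = replicate q (Bj j) @ replicate (Suc (rr j - q - 1)) (Bj j)"
    by (subst r) (rule replicate_add)
  then have "replicate (rr j) (Bj j) = replicate q (Bj j) @ Bj j # replicate (rr j - q - 1) (Bj j)"
    by simp
  then have "seg j = concat (replicate q (Bj j)) @ Bj j @ concat (replicate (rr j - q - 1) (Bj j))"
    by (simp add: seg_def)
  moreover have "length (concat (replicate q (Bj j))) = q * mm j"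
    by (simp add: length_concat len_Bj sum_list_replicate)
  ultimately show ?thesis using assms(2) len_Bj[of j] by simp
qed

lemma find_J: "\<exists>J. length (pre J) \<le> n \<and> n < length (pre (Suc J))"
proof -
  define J where "J = (LEAST J. n < length (pre (Suc J)))"
  have ex: "n < length (pre (Suc n))" using len_pre_ge[of "Suc n"] by simp
  have 1: "n < length (pre (Suc J))" unfolding J_def by (rule LeastI[of "\<lambda>J. n < length (pre (Suc J))", OF ex])
  have 2: "length (pre J) \<le> n"
  proof (cases J)
    case (Suc J')
    then have "\<not> n < length (pre (Suc J'))" using not_less_Least[of J' "\<lambda>J. n < length (pre (Suc J))"] J_def by auto
    then show ?thesis using Suc by simp
  qed (simp add: pre_def)
  show ?thesis using 1 2 by blast
qed

definition kinds :: "nat \<Rightarrow> nat \<Rightarrow> nat list" where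
  "kinds K J = concat (map (\<lambda>j. replicate (rr j) j) [K..<J])"

lemma seg_kinds: "concat (map seg [K..<J]) = concat (map Bj (kinds K J))"
proof -
  have "seg = (\<lambda>x. concat (replicate (rr x) (Bj x)))" by (rule ext) (simp add: seg_def)
  then show ?thesis by (simp add: kinds_def map_concat concat_concat' comp_def map_replicate)
qed

lemma set_kinds: "j \<in> set (kinds K J) \<Longrightarrow> K \<le> j"
  by (auto simp: kinds_def)

lemma mm_sq_le: assumes "1 \<le> J" shows "mm J * mm J \<le> length (pre J)"
proof -
  obtain J' where J: "J = Suc J'" using assms by (cases J) auto
  have "mm J * mm J = rr J'" by (simp add: rr_def J)
  also have "\<dots> \<le> length (seg J')" using len_seg mm_pos by (metis mult.right_neutral mult_le_mono2)
  also have "\<dots> \<le> length (pre J)" by (simp add: J pre_Suc)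
  finally show ?thesis .
qed

lemma decomp:
  assumes K: "1 \<le> K" and n: "length (pre K) \<le> n"
  shows "\<exists>J js s. prefix Sq n = pre K @ concat (map Bj js) @ take s (Bj J) \<and> (\<forall>j\<in>set js. K \<le> j)
     \<and> s < mm J \<and> mm J * mm J \<le> n \<and> length (pre K) + length (concat (map Bj js)) + s = n"
proof -
  obtain J where J: "length (pre J) \<le> n" "n < length (pre (Suc J))" using find_J by blast
  have KJ: "K \<le> J"
  proof (rule ccontr)
    assume "\<not> K \<le> J"
    then have "length (pre (Suc J)) \<le> length (pre K)" by (simp add: pre_mono_len)
    then show False using J n by simp
  qed
  define d where "d = n - length (pre J)"
  define q where "q = d div mm J"
  define s where "s = d mod mm J"
  have dlt: "d < rr J * mm J" using J len_pre_Suc[of J] by (simp add: d_def)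
  have mJ: "0 < mm J" using mm_pos[of J] by simp
  have s: "s < mm J" using mJ by (simp add: s_def)
  have q: "q < rr J" using dlt mJ by (simp add: q_def less_mult_imp_div_less)
  have d: "d = q * mm J + s" by (simp add: q_def s_def)
  have "prefix Sq n = take n (pre (Suc J))" using J by (intro prefix_Sq) simp
  also have "\<dots> = pre J @ take d (seg J)" using J by (simp add: pre_Suc d_def)
  also have "\<dots> = pre J @ concat (replicate q (Bj J)) @ take s (Bj J)"
    using seg_split[OF q s] d by simp
  also have "pre J = pre K @ concat (map Bj (kinds K J))"
    using pre_add[of K "J - K"] KJ seg_kinds by simp
  finally have e: "prefix Sq n = pre K @ concat (map Bj (kinds K J @ replicate q J)) @ take s (Bj J)"
    by (simp add: map_replicate)
  have js: "\<forall>j\<in>set (kinds K J @ replicate q J). K \<le> j" using set_kinds KJ by auto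
  have sq: "mm J * mm J \<le> n" using mm_sq_le[of J] KJ K J by linarith
  have len: "length (pre K) + length (concat (map Bj (kinds K J @ replicate q J))) + s = n"
  proof -
    have "length (prefix Sq n) = n" by (simp add: prefix_def)
    moreover have "length (take s (Bj J)) = s" using s len_Bj[of J] by simp
    ultimately show ?thesis using e by (metis length_append add.assoc)
  qed
  show ?thesis using e js s sq len by blast
qed

lemma mm_double: "2 * mm j \<le> mm (Suc j)"
proof -
  have "(2::nat) ^ (2 ^ j) \<le> 2 ^ (2 ^ Suc j)" by (intro power_increasing) auto
  then show ?thesis by (simp add: mm_def)
qed

lemma sum_mm: "(\<Sum>j<Suc J. mm j) \<le> 2 * mm J"
proof (induction J)
  case 0 then show ?case by simp
next
  case (Suc J)
  then show ?case using mm_double[of J] by simp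
qed

lemma J_le_mm: "Suc J \<le> mm J"
proof -
  have "Suc J \<le> 2 ^ J" by (induction J) auto
  moreover have "2 ^ J \<le> mm J" by (simp add: mm_def)
  ultimately show ?thesis by simp
qed

lemma fac_pre: "card (fac t (pre J)) \<le> 1 + (\<Sum>j<J. mm j + t)"
proof (induction J)
  case 0
  have "fac t (pre 0) \<subseteq> {[]}" by (auto simp: fac_def pre_def)
  then have "card (fac t (pre 0)) \<le> card {[] :: bool list}" by (rule card_mono[rotated]) simp
  then have "card (fac t (pre 0)) \<le> 1" by simp
  then show ?case by simp
next
  case (Suc J)
  have "card (fac t (pre (Suc J))) \<le> card (fac t (pre J)) + card (fac t (seg J)) + t"
    unfolding pre_Suc by (rule fac_append)
  moreover have "card (fac t (seg J)) \<le> mm J" using fac_rep[OF Bj_ne, of t "rr J" J] len_Bj by (simp add: seg_def)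
  ultimately show ?case using Suc by simp
qed

lemma fac_pre_Suc: "card (fac t (pre (Suc J))) \<le> (t + 3) * mm J"
proof -
  have "card (fac t (pre (Suc J))) \<le> 1 + (\<Sum>j<Suc J. mm j) + Suc J * t"
    using fac_pre[of t "Suc J"] by (simp add: sum.distrib)
  also have "\<dots> \<le> 1 + 2 * mm J + mm J * t"
  proof -
    have "Suc J * t \<le> mm J * t" using J_le_mm[of J] by (rule mult_le_mono1)
    then show ?thesis using sum_mm[of J] by linarith
  qed
  also have "\<dots> \<le> (t + 3) * mm J" using mm_pos[of J] by (simp add: algebra_simps)
  finally show ?thesis .
qed

lemma fac_prefix:
  "\<exists>J. card (fac t (prefix Sq n)) \<le> (t + 3) * mm J \<and> (1 \<le> J \<longrightarrow> mm J * mm J \<le> n) \<and> (n \<ge> length (pre 1) \<longrightarrow> 1 \<le> J)"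
proof -
  obtain J where J: "length (pre J) \<le> n" "n < length (pre (Suc J))" using find_J by blast
  have "prefix Sq n = take n (pre (Suc J))" using J by (intro prefix_Sq) simp
  then have "card (fac t (prefix Sq n)) \<le> card (fac t (pre (Suc J)))"
    by (metis card_mono fac_finite fac_take)
  also have "\<dots> \<le> (t + 3) * mm J" by (rule fac_pre_Suc)
  finally have 1: "card (fac t (prefix Sq n)) \<le> (t + 3) * mm J" .
  have 2: "1 \<le> J \<longrightarrow> mm J * mm J \<le> n" using mm_sq_le J by (meson le_trans)
  have 3: "n \<ge> length (pre 1) \<longrightarrow> 1 \<le> J"
  proof
    assume "n \<ge> length (pre 1)"
    then show "1 \<le> J" using J(2) by (cases J) auto
  qed
  show ?thesis using 1 2 3 by blast
qed



lemma occ_cnt: "occ S x n = cnt x (prefix S n)"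
proof -
  have "{i. i + length x \<le> n \<and> map S [i..<i + length x] = x}
      = {i. i + length x \<le> length (prefix S n) \<and> take (length x) (drop i (prefix S n)) = x}"
  proof (rule Collect_cong)
    fix i
    show "(i + length x \<le> n \<and> map S [i..<i + length x] = x) =
          (i + length x \<le> length (prefix S n) \<and> take (length x) (drop i (prefix S n)) = x)"
    proof (cases "i + length x \<le> n")
      case True
      have "take (length x) (drop i (prefix S n)) = map S [i..<i + length x]"
        using True by (simp add: prefix_def drop_map take_map)
      then show ?thesis using True by (simp add: prefix_def)
    next
      case False then show ?thesis by (simp add: prefix_def)
    qed
  qed
  then show ?thesis unfolding occ_def cnt_def by simp
qed

lemma cnt_Bj_err:
  assumes "length x \<ge> 1"
  shows "\<bar>real (cnt x (Bj j)) - real (mm j) / 2 ^ length x\<bar> \<le> real (length x) * 2 ^ (2 ^ j)"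
  using cnt_Bk_err[OF assms, of "2 ^ j"] by (simp add: Bj_def mm_def)

lemma cnt_blocks:
  assumes t1: "length x \<ge> 1" and js: "\<forall>j\<in>set js. K \<le> j"
  shows "\<bar>real (cnt x (concat (map Bj js))) - real (length (concat (map Bj js))) / 2 ^ length x\<bar>
           \<le> (2 * real (length x) / 2 ^ K) * real (length (concat (map Bj js)))"
  using js
proof (induction js)
  case Nil
  then show ?case using t1 by (cases x) (auto simp: cnt_def)
next
  case (Cons j js)
  define t where "t = real (length x)"
  define R where "R = concat (map Bj js)"
  define e where "e = 2 * t / 2 ^ K"
  have IH: "\<bar>real (cnt x R) - real (length R) / 2 ^ length x\<bar> \<le> e * real (length R)"
    using Cons by (simp add: R_def e_def t_def)
  have B: "\<bar>real (cnt x (Bj j)) - real (mm j) / 2 ^ length x\<bar> \<le> t * 2 ^ (2 ^ j)"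
    unfolding t_def by (rule cnt_Bj_err[OF t1])
  have lo: "real (cnt x (Bj j)) + real (cnt x R) \<le> real (cnt x (Bj j @ R))"
    using cnt_append_ge[OF t1, of "Bj j" R] by linarith
  have hi: "real (cnt x (Bj j @ R)) \<le> real (cnt x (Bj j)) + real (cnt x R) + t"
    using cnt_append_le[of x "Bj j" R] unfolding t_def by linarith
  have Kj: "K \<le> j" using Cons.prems by simp
  have t0: "0 \<le> t" by (simp add: t_def)
  have mmj: "2 ^ K * 2 ^ (2 ^ j) \<le> real (mm j)"
  proof -
    have "(2::real) ^ K \<le> 2 ^ j" using Kj by (simp add: power_increasing)
    then have "(2::real) ^ K * 2 ^ (2 ^ j) \<le> 2 ^ j * 2 ^ (2 ^ j)" by (simp add: mult_right_mono)
    then show ?thesis by (simp add: mm_def)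
  qed
  have key: "t * 2 ^ (2 ^ j) + t \<le> e * real (mm j)"
  proof -
    have "t \<le> t * 2 ^ (2 ^ j)" using t0 by (simp add: mult_le_cancel_left1)
    then have "t * 2 ^ (2 ^ j) + t \<le> e * (2 ^ K * 2 ^ (2 ^ j))" by (simp add: e_def)
    also have "\<dots> \<le> e * real (mm j)" using mmj t0 by (intro mult_left_mono) (auto simp: e_def)
    finally show ?thesis .
  qed
  have len: "length (concat (map Bj (j # js))) = mm j + length R" by (simp add: R_def len_Bj)
  have d: "real (mm j + length R) / 2 ^ length x = real (mm j) / 2 ^ length x + real (length R) / 2 ^ length x"
    by (simp add: add_divide_distrib)
  have ed: "e * real (mm j + length R) = e * real (mm j) + e * real (length R)" by (simp add: algebra_simps)
  have "\<bar>real (cnt x (Bj j @ R)) - real (mm j + length R) / 2 ^ length x\<bar> \<le> e * real (mm j + length R)"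
    unfolding d ed using IH B lo hi key unfolding abs_le_iff by (intro conjI; linarith)
  then show ?case using len by (simp add: R_def e_def t_def)
qed

lemma cnt_prefix_bound:
  assumes t1: "length x \<ge> 1" and K: "1 \<le> K" and n: "length (pre K) \<le> n"
  shows "\<bar>real (cnt x (prefix Sq n)) - real n / 2 ^ length x\<bar>
     \<le> (2 * real (length x) / 2 ^ K) * real n + real (length (pre K)) + 2 * real (length x) + sqrt (real n)"
proof -
  obtain J js s where e: "prefix Sq n = pre K @ concat (map Bj js) @ take s (Bj J)"
    and js: "\<forall>j\<in>set js. K \<le> j" and s: "s < mm J" and sq: "mm J * mm J \<le> n"
    and len: "length (pre K) + length (concat (map Bj js)) + s = n"
    using decomp[OF K n] by blast
  define M where "M = concat (map Bj js)"
  define Z where "Z = take s (Bj J)"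
  define E where "E = length (pre K)"
  define t where "t = real (length x)"
  define ee where "ee = 2 * t / 2 ^ K"
  have lZ: "length Z = s" using s len_Bj[of J] by (simp add: Z_def)
  have ssq: "real s \<le> sqrt (real n)"
  proof -
    have "real (mm J) ^ 2 \<le> real n" using sq by (metis of_nat_le_iff of_nat_mult power2_eq_square)
    then have "real (mm J) \<le> sqrt (real n)" by (rule real_le_rsqrt)
    then show ?thesis using s by linarith
  qed
  have cZ: "real (cnt x Z) \<le> real s" using cnt_le_len[OF t1, of Z] lZ by simp
  have bl: "\<bar>real (cnt x M) - real (length M) / 2 ^ length x\<bar> \<le> ee * real (length M)"
    using cnt_blocks[OF t1 js] by (simp add: M_def ee_def t_def)
  have lo1: "real (cnt x M) \<le> real (cnt x (M @ Z))" using cnt_append_ge[OF t1, of M Z] by linarith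
  have lo2: "real (cnt x (M @ Z)) \<le> real (cnt x (pre K @ M @ Z))" using cnt_append_ge[OF t1, of "pre K" "M @ Z"] by linarith
  have hi1: "real (cnt x (pre K @ M @ Z)) \<le> real (cnt x (pre K)) + real (cnt x (M @ Z)) + t"
    using cnt_append_le[of x "pre K" "M @ Z"] unfolding t_def by linarith
  have hi2: "real (cnt x (M @ Z)) \<le> real (cnt x M) + real (cnt x Z) + t"
    using cnt_append_le[of x M Z] unfolding t_def by linarith
  have cE: "real (cnt x (pre K)) \<le> real E" using cnt_le_len[OF t1, of "pre K"] by (simp add: E_def)
  have nn: "real n = real E + real (length M) + real s" using len by (simp add: E_def M_def)
  have p1: "(1::real) \<le> 2 ^ length x" by simp
  have dn: "real n / 2 ^ length x = real E / 2 ^ length x + real (length M) / 2 ^ length x + real s / 2 ^ length x"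
    unfolding nn by (simp add: add_divide_distrib)
  have dE: "0 \<le> real E / 2 ^ length x" "real E / 2 ^ length x \<le> real E"
    using p1 by (auto simp: divide_le_eq) (simp add: mult_le_cancel_left1)
  have ds: "0 \<le> real s / 2 ^ length x" "real s / 2 ^ length x \<le> real s"
    using p1 by (auto simp: divide_le_eq) (simp add: mult_le_cancel_left1)
  have ee0: "0 \<le> ee" by (simp add: ee_def t_def)
  have eM: "ee * real (length M) \<le> ee * real n" using nn ee0 by (intro mult_left_mono) auto
  have dM: "0 \<le> real (length M) / 2 ^ length x" by simp
  have bl': "real (cnt x M) - real (length M) / 2 ^ length x \<le> ee * real (length M)"
     "real (length M) / 2 ^ length x - real (cnt x M) \<le> ee * real (length M)"
    using bl by (auto simp: abs_le_iff)
  have A: "real (cnt x (pre K @ M @ Z)) - real n / 2 ^ length x \<le> ee * real n + real E + 2 * t + sqrt (real n)"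
    using bl' lo1 lo2 hi1 hi2 cE dn dE ds eM ssq cZ dM by linarith
  have B: "real n / 2 ^ length x - real (cnt x (pre K @ M @ Z)) \<le> ee * real n + real E + 2 * t + sqrt (real n)"
    using bl' lo1 lo2 hi1 hi2 cE dn dE ds eM ssq cZ dM t_def of_nat_0_le_iff[of "length x"] by linarith
  show ?thesis
    unfolding e M_def[symmetric] Z_def[symmetric] E_def[symmetric] t_def[symmetric] ee_def[symmetric]
    using A B by (simp add: abs_le_iff)
qed

lemma aux_div: fixes a n c :: real assumes "0 < n" shows "a / n - 1 / c = (a - n / c) / n"
proof -
  have "(a - n / c) / n = a / n - (n / c) / n" by (rule diff_divide_distrib)
  also have "(n / c) / n = 1 / c" using assms by simp
  finally show ?thesis by simp
qed

lemma normal_Sq: "normal Sq"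
  unfolding normal_def
proof
  fix x :: "bool list"
  show "(\<lambda>n. real (occ Sq x n) / real n) \<longlonglongrightarrow> 1 / 2 ^ length x"
  proof (cases "x = []")
    case True
    have o: "occ Sq x n = n + 1" for n
    proof -
      have "{i. i + length x \<le> n \<and> map Sq [i..<i + length x] = x} = {..n}" using True by auto
      then show ?thesis unfolding occ_def by simp
    qed
    have "(\<lambda>n. real (n + 1) / real n) \<longlonglongrightarrow> 1" by real_asymp
    then show ?thesis using True o by simp
  next
    case False
    then have t1: "length x \<ge> 1" by (cases x) auto
    define t where "t = real (length x)"
    have t0: "0 \<le> t" by (simp add: t_def)
    show ?thesis
    proof (rule LIMSEQ_I)
      fix r :: real assume r: "0 < r"
      obtain k :: nat where k: "8 * t / r < real k" using reals_Archimedean2 by blast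
      define K where "K = Suc k"
      have K1: "1 \<le> K" by (simp add: K_def)
      have "real K < 2 ^ K"
      proof -
        have "K < 2 ^ K" by (rule less_exp)
        then show ?thesis by (metis of_nat_less_iff of_nat_numeral of_nat_power)
      qed
      then have "8 * t / r < 2 ^ K" using k by (simp add: K_def)
      then have "8 * t < r * 2 ^ K" using r by (simp add: divide_less_eq mult.commute)
      then have eK: "2 * t / 2 ^ K \<le> r / 4" by (simp add: divide_le_eq field_simps)
      define E where "E = length (pre K)"
      have ev1: "eventually (\<lambda>n. real E + 2 * t + sqrt (real n) \<le> r / 2 * real n) sequentially"
        using r by real_asymp
      have ev2: "eventually (\<lambda>n. E \<le> n \<and> 1 \<le> n) sequentially"
        using eventually_ge_at_top[of "max E 1"] by (auto elim: eventually_mono)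
      obtain N where N: "\<And>n. n \<ge> N \<Longrightarrow> (real E + 2 * t + sqrt (real n) \<le> r / 2 * real n) \<and> E \<le> n \<and> 1 \<le> n"
        using eventually_conj[OF ev1 ev2] unfolding eventually_sequentially by blast
      show "\<exists>no. \<forall>n\<ge>no. norm (real (occ Sq x n) / real n - 1 / 2 ^ length x) < r"
      proof (intro exI allI impI)
        fix n assume n: "N \<le> n"
        have nE: "E \<le> n" and n1: "1 \<le> n" and asy: "real E + 2 * t + sqrt (real n) \<le> r / 2 * real n"
          using N[OF n] by auto
        have b: "\<bar>real (cnt x (prefix Sq n)) - real n / 2 ^ length x\<bar> \<le> (2 * t / 2 ^ K) * real n + real E + 2 * t + sqrt (real n)"
          using cnt_prefix_bound[OF t1 K1] nE by (simp add: E_def t_def)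
        have "(2 * t / 2 ^ K) * real n \<le> r / 4 * real n" using eK by (intro mult_right_mono) auto
        then have b2: "\<bar>real (cnt x (prefix Sq n)) - real n / 2 ^ length x\<bar> \<le> 3 * r / 4 * real n"
          using b asy by linarith
        have np: "0 < real n" using n1 by simp
        have eq: "real (occ Sq x n) / real n - 1 / 2 ^ length x = (real (cnt x (prefix Sq n)) - real n / 2 ^ length x) / real n"
          unfolding occ_cnt using np by (rule aux_div)
        have "\<bar>real (cnt x (prefix Sq n)) - real n / 2 ^ length x\<bar> / real n \<le> (3 * r / 4 * real n) / real n"
          using b2 np by (intro divide_right_mono) auto
        also have "(3 * r / 4 * real n) / real n = 3 * r / 4" using np by simp
        finally have "\<bar>(real (cnt x (prefix Sq n)) - real n / 2 ^ length x) / real n\<bar> \<le> 3 * r / 4"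
          using np by (simp only: abs_divide abs_of_pos)
        moreover have "3 * r / 4 < r" using r by simp
        ultimately show "norm (real (occ Sq x n) / real n - 1 / 2 ^ length x) < r"
          unfolding eq real_norm_def by (rule le_less_trans)
      qed
    qed
  qed
qed



lemma log_bin: assumes n: "1 \<le> n" shows "real (length (bin n)) \<le> log 2 (real n) + 1"
proof -
  have "2 ^ length (bin n) \<le> 2 * n" by (rule bin_log) (use n in simp)
  then have "(2::real) ^ length (bin n) \<le> 2 * real n" by (metis of_nat_le_iff of_nat_mult of_nat_numeral of_nat_power)
  then have "(2::real) powr real (length (bin n)) \<le> 2 * real n" by (simp add: powr_realpow)
  then have "real (length (bin n)) \<le> log 2 (2 * real n)" using n by (subst le_log_iff) auto
  also have "log 2 (2 * real n) = 1 + log 2 (real n)" using n by (simp add: log_mult)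
  finally show ?thesis by simp
qed

lemma LZ_bound: "eventually (\<lambda>n. real (length (LZ (prefix Sq n))) \<le> real n / 4) sequentially"
proof -
  define G where "G = (\<lambda>n::nat. 3 * log 2 (real n) + 6)"
  have ev1: "eventually (\<lambda>n. G n + 8 * (G n)^2 * (8 * G n + 3) * sqrt (real n) \<le> real n / 8) sequentially"
    unfolding G_def by real_asymp
  have ev2: "eventually (\<lambda>n. max 1 (length (pre 1)) \<le> n) sequentially" by (rule eventually_ge_at_top)
  show ?thesis using eventually_conj[OF ev1 ev2]
  proof (rule eventually_mono)
    fix n assume A: "G n + 8 * (G n)^2 * (8 * G n + 3) * sqrt (real n) \<le> real n / 8 \<and> max 1 (length (pre 1)) \<le> n"
    then have asy: "G n + 8 * (G n)^2 * (8 * G n + 3) * sqrt (real n) \<le> real n / 8"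
      and n1: "1 \<le> n" and nP: "length (pre 1) \<le> n" by auto
    define x where "x = prefix Sq n"
    have lx: "length x = n" by (simp add: x_def prefix_def)
    define g where "g = 3 * length (bin n) + 3"
    define T where "T = 8 * g"
    define ps where "ps = ph [[]] [] x"
    have LZ1: "real (length (LZ x)) \<le> real (length ps) * real g"
      using LZ_length[of x] lx unfolding ps_def g_def by (metis of_nat_le_iff of_nat_mult)
    have cps: "concat ps = x" using concat_ph[of "[[]]" "[]" x] by (simp add: ps_def)
    have pc: "real (length ps) \<le> 1 + real (\<Sum>t\<in>{1..T}. card (fac t x)) + real (length x) / real (T + 1)"
      by (rule phrase_count[OF cps]) (use ph_nonempty ph_distinct in \<open>auto simp: ps_def\<close>)
    have sqn: "0 \<le> sqrt (real n)" by simp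
    have facb: "real (card (fac t x)) \<le> real (T + 3) * sqrt (real n)" if t: "t \<in> {1..T}" for t
    proof -
      obtain J where J: "card (fac t (prefix Sq n)) \<le> (t + 3) * mm J" "1 \<le> J \<longrightarrow> mm J * mm J \<le> n"
        "n \<ge> length (pre 1) \<longrightarrow> 1 \<le> J" using fac_prefix by blast
      have "mm J * mm J \<le> n" using J nP by blast
      then have "real (mm J) ^ 2 \<le> real n" by (metis of_nat_le_iff of_nat_mult power2_eq_square)
      then have mJ: "real (mm J) \<le> sqrt (real n)" by (rule real_le_rsqrt)
      have "real (card (fac t x)) \<le> real (t + 3) * real (mm J)" using J(1) unfolding x_def
        by (metis of_nat_le_iff of_nat_mult)
      also have "\<dots> \<le> real (T + 3) * sqrt (real n)" using t mJ by (intro mult_mono) auto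
      finally show ?thesis .
    qed
    have sumb: "real (\<Sum>t\<in>{1..T}. card (fac t x)) \<le> real T * (real (T + 3) * sqrt (real n))"
    proof -
      have "real (\<Sum>t\<in>{1..T}. card (fac t x)) = (\<Sum>t\<in>{1..T}. real (card (fac t x)))" by simp
      also have "\<dots> \<le> (\<Sum>t\<in>{1..T}. real (T + 3) * sqrt (real n))" by (rule sum_mono) (rule facb)
      also have "\<dots> = real T * (real (T + 3) * sqrt (real n))" by simp
      finally show ?thesis .
    qed
    define gr where "gr = real g"
    have gr3: "3 \<le> gr" by (simp add: gr_def g_def)
    have grG: "gr \<le> G n" using log_bin[OF n1] by (simp add: gr_def g_def G_def)
    have Tr: "real T = 8 * gr" by (simp add: T_def gr_def)
    have ps2: "real (length ps) \<le> 1 + 8 * gr * (8 * gr + 3) * sqrt (real n) + real n / (8 * gr + 1)"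
    proof -
      have h3: "real (T + 3) = 8 * gr + 3" using Tr by simp
      have h1: "real (T + 1) = 8 * gr + 1" using Tr by simp
      have p: "real T * (real (T + 3) * sqrt (real n)) = 8 * gr * (8 * gr + 3) * sqrt (real n)"
        unfolding Tr h3 by (simp add: mult.assoc)
      show ?thesis using pc[unfolded lx h1] sumb[unfolded p] by linarith
    qed
    have "real (length (LZ x)) \<le> (1 + 8 * gr * (8 * gr + 3) * sqrt (real n) + real n / (8 * gr + 1)) * gr"
    proof -
      have "real (length ps) * gr \<le> (1 + 8 * gr * (8 * gr + 3) * sqrt (real n) + real n / (8 * gr + 1)) * gr"
        using ps2 gr3 by (intro mult_right_mono) auto
      then show ?thesis using LZ1 unfolding gr_def by linarith
    qed
    also have "\<dots> = gr + 8 * (gr ^ 2 * (8 * gr + 3)) * sqrt (real n) + gr * real n / (8 * gr + 1)"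
      by (simp add: algebra_simps power2_eq_square)
    also have "\<dots> \<le> G n + 8 * ((G n) ^ 2 * (8 * G n + 3)) * sqrt (real n) + real n / 8"
    proof -
      have "gr ^ 2 * (8 * gr + 3) \<le> (G n) ^ 2 * (8 * G n + 3)"
        using grG gr3 by (intro mult_mono power_mono) auto
      then have a: "8 * (gr ^ 2 * (8 * gr + 3)) * sqrt (real n) \<le> 8 * ((G n) ^ 2 * (8 * G n + 3)) * sqrt (real n)"
        using sqn by (intro mult_right_mono) auto
      have "gr * real n / (8 * gr + 1) \<le> real n / 8"
        using gr3 by (simp add: divide_le_eq field_simps mult_right_mono)
      then show ?thesis using a grG by linarith
    qed
    also have "\<dots> \<le> real n / 4" using asy by (simp add: algebra_simps)
    finally show "real (length (LZ (prefix Sq n))) \<le> real n / 4" by (simp add: x_def)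
  qed
qed

lemma ILFST_bound:
  assumes C: "ILFST C"
  shows "eventually (\<lambda>n. real n / 2 \<le> real (length (fst_out C (prefix Sq n)))) sequentially"
proof -
  obtain Q q0 \<delta> \<nu> where Ce: "C = (Q, q0, \<delta>, \<nu>)" by (cases C) auto
  interpret ilfst Q q0 \<delta> \<nu> using C Ce by unfold_locales simp
  obtain a0 where a0: "\<forall>j\<ge>a0. \<forall>q\<in>R. 3 * length (Bk (2 ^ j)) \<le> 4 * length (fst (run \<delta> \<nu> q (Bk (2 ^ j))))"
    using exists_a0 by blast
  define K where "K = max a0 1"
  define E where "E = length (pre K)"
  have K1: "1 \<le> K" by (simp add: K_def)
  have ev1: "eventually (\<lambda>n. 3 * real E + 3 * sqrt (real n) \<le> real n) sequentially" by real_asymp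
  have ev2: "eventually (\<lambda>n. E \<le> n) sequentially" by (rule eventually_ge_at_top)
  show ?thesis using eventually_conj[OF ev1 ev2]
  proof (rule eventually_mono)
    fix n assume A: "3 * real E + 3 * sqrt (real n) \<le> real n \<and> E \<le> n"
    obtain J js s where e: "prefix Sq n = pre K @ concat (map Bj js) @ take s (Bj J)"
      and js: "\<forall>j\<in>set js. K \<le> j" and s: "s < mm J" and sq: "mm J * mm J \<le> n"
      and len: "length (pre K) + length (concat (map Bj js)) + s = n"
    proof -
      have "length (pre K) \<le> n" using A by (simp add: E_def)
      from decomp[OF K1 this] show ?thesis using that by blast
    qed
    define M where "M = concat (map Bj js)"
    have M': "M = concat (map (\<lambda>j. Bk (2 ^ j)) js)"
      unfolding M_def by (rule arg_cong[where f=concat], rule map_cong) (auto simp: Bj_def)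
    define q1 where "q1 = snd (run \<delta> \<nu> q0 (pre K))"
    have q1R: "q1 \<in> R" by (simp add: R_def q1_def)
    have js': "\<forall>j\<in>set js. a0 \<le> j" using js by (auto simp: K_def)
    have ob: "3 * length M \<le> 4 * length (fst (run \<delta> \<nu> q1 M))"
      unfolding M' by (rule out_blocks[OF a0 js' q1R])
    have "length (fst (run \<delta> \<nu> q1 M)) \<le> length (fst_out C (prefix Sq n))"
      unfolding e Ce fst_out_def M_def[symmetric] by (simp add: run_append q1_def)
    then have o1: "3 * real (length M) \<le> 4 * real (length (fst_out C (prefix Sq n)))" using ob by linarith
    have "real (mm J) ^ 2 \<le> real n" using sq by (metis of_nat_le_iff of_nat_mult power2_eq_square)
    then have "real (mm J) \<le> sqrt (real n)" by (rule real_le_rsqrt)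
    then have ssq: "real s \<le> sqrt (real n)" using s by linarith
    have nn: "real n = real E + real (length M) + real s" using len by (simp add: E_def M_def)
    show "real n / 2 \<le> real (length (fst_out C (prefix Sq n)))" using o1 ssq nn A by linarith
  qed
qed

theorem mainTheorem7:
  shows "\<exists>S :: nat \<Rightarrow> bool. normal S \<and> LZ_deep S"
proof (intro exI conjI)
  show "normal Sq" by (rule normal_Sq)
  show "LZ_deep Sq"
    unfolding LZ_deep_def
  proof (intro exI conjI allI impI)
    show "(0::real) < 1 / 4" by simp
    fix C assume C: "ILFST C"
    show "\<forall>\<^sub>F n in sequentially. real (length (fst_out C (prefix Sq n))) - real (length (LZ (prefix Sq n))) \<ge> 1 / 4 * real n"
      using eventually_conj[OF ILFST_bound[OF C] LZ_bound] by (rule eventually_mono) auto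
  qed
qed


end
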